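(* Let $n>6$ be an integer and let $x=\binom{n}{3}-2(n-2)$. Then $$[x]^3_4-1\le k_4(k_3\le x)\le [x]^3_4.$$
   Context: All graphs are finite simple graphs. For a graph $g$ and an integer $r>1$, $k_r(g)$ denotes the number of subgraphs of $g$ isomorphic to the complete graph $K_r$. For $r<s$ and a non-negative integer $x$, $k_s(k_r\le x)$ denotes the maximum of $k_s(g)$ over all graphs $g$ with $k_r(g)\le x$. The $r$-canonical representation of a non-negative integer $x$ is obtained greedily: choose $a_r$ as large as possible with $\binom{a_r}{r}\le x$, then $a_{r-1}$ as large as possible with $\binom{a_{r-1}}{r-1}\le x-\binom{a_r}{r}$, and so on, until $x=\binom{a_r}{r}+\binom{a_{r-1}}{r-1}+\dots+\binom{a_{r-j}}{r-j}$; one has $a_r>a_{r-1}>\dots>a_{r-j}$. For $r<s$, $[x]^r_s=\binom{a_r}{s}+\binom{a_{r-1}}{s-1}+\dots+\binom{a_{r-j}}{s-j}$ (replace $r$ by $s$ in the representation). A binomial coefficient whose top entry is less than its bottom entry is taken to be $0$. *)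

theory Defs
  imports Main
begin

text \<open>A finite simple graph on natural-number vertices: a finite vertex set V and a
 symmetric irreflexive adjacency relation E supported on V. Every finite simple graph
 is isomorphic to one of this form.\<close>
definition simple_graph :: "nat set \<Rightarrow> (nat \<Rightarrow> nat \<Rightarrow> bool) \<Rightarrow> bool" where
  "simple_graph V E \<longleftrightarrow> finite V \<and> (\<forall>u v. E u v \<longrightarrow> E v u) \<and> (\<forall>u. \<not> E u u)
     \<and> (\<forall>u v. E u v \<longrightarrow> u \<in> V \<and> v \<in> V)"

definition kcount :: "nat \<Rightarrow> nat set \<Rightarrow> (nat \<Rightarrow> nat \<Rightarrow> bool) \<Rightarrow> nat" where
  "kcount r V E = card {S. S \<subseteq> V \<and> card S = r \<and> (\<forall>u\<in>S. \<forall>v\<in>S. u \<noteq> v \<longrightarrow> E u v)}"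

definition kmax :: "nat \<Rightarrow> nat \<Rightarrow> nat \<Rightarrow> nat" where
  "kmax s r x = Max {kcount s V E | V E. simple_graph V E \<and> kcount r V E \<le> x}"

text \<open>[x]^r_s computed from the greedy r-canonical representation.
  canon_shift r s x = sum of binom(a_i, s - (r - i)) over the representation of x.\<close>
fun canon_shift :: "nat \<Rightarrow> nat \<Rightarrow> nat \<Rightarrow> nat" where
  "canon_shift 0 s x = 0"
| "canon_shift (Suc r) s x =
     (if x = 0 then 0
      else let a = (GREATEST a. a choose (Suc r) \<le> x)
           in (a choose s) + canon_shift r (s - 1) (x - (a choose (Suc r))))"

end

theory Submission
  imports Defs
begin


definition shadow :: "nat set set \<Rightarrow> nat set set" where
  "shadow F = {A - {x} | A x. A \<in> F \<and> x \<in> A}"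

definition unif :: "nat \<Rightarrow> nat set set \<Rightarrow> bool" where
  "unif k F \<longleftrightarrow> finite F \<and> (\<forall>A\<in>F. finite A \<and> card A = k)"

definition stab :: "nat set set \<Rightarrow> bool" where
  "stab F \<longleftrightarrow> (\<forall>A\<in>F. 0 \<notin> A \<longrightarrow> (\<forall>a\<in>A. insert 0 (A - {a}) \<in> F))"

definition shf :: "nat \<Rightarrow> nat set \<Rightarrow> nat set" where
  "shf j A = insert 0 (A - {j})"

definition movable :: "nat \<Rightarrow> nat set set \<Rightarrow> nat set \<Rightarrow> bool" where
  "movable j F A \<longleftrightarrow> j \<in> A \<and> 0 \<notin> A \<and> shf j A \<notin> F"

definition SF :: "nat \<Rightarrow> nat set set \<Rightarrow> nat set set" where
  "SF j F = {A\<in>F. \<not> movable j F A} \<union> shf j ` {A\<in>F. movable j F A}"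

definition cnt0 :: "nat set set \<Rightarrow> nat" where
  "cnt0 F = card {A\<in>F. 0 \<in> A}"

lemma shf_inj: "j \<noteq> 0 \<Longrightarrow> inj_on (shf j) {A. j \<in> A \<and> 0 \<notin> A}"
proof (rule inj_onI)
  fix A B assume j: "j \<noteq> 0" and A: "A \<in> {A. j \<in> A \<and> 0 \<notin> A}" and B: "B \<in> {A. j \<in> A \<and> 0 \<notin> A}"
    and e: "shf j A = shf j B"
  have "A = insert j (shf j A - {0})" using A j unfolding shf_def by auto
  also have "\<dots> = insert j (shf j B - {0})" using e by simp
  also have "\<dots> = B" using B j unfolding shf_def by auto
  finally show "A = B" .
qed

lemma shadow_finite: "unif k F \<Longrightarrow> finite (shadow F)"
proof -
  assume u: "unif k F"
  have "shadow F = (\<lambda>(A,x). A - {x}) ` (SIGMA A:F. A)"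
    unfolding shadow_def by auto
  moreover have "finite (SIGMA A:F. A)" using u unfolding unif_def by auto
  ultimately show ?thesis by simp
qed

lemma SF_card:
  assumes "finite F" "j \<noteq> 0"
  shows "card (SF j F) = card F"
proof -
  let ?M = "{A\<in>F. movable j F A}"
  have d: "{A\<in>F. \<not> movable j F A} \<inter> shf j ` ?M = {}"
    unfolding movable_def by auto
  have i: "inj_on (shf j) ?M"
    by (rule inj_on_subset[OF shf_inj[OF assms(2)]]) (auto simp: movable_def)
  have "card (SF j F) = card {A\<in>F. \<not> movable j F A} + card (shf j ` ?M)"
    unfolding SF_def using d assms(1) by (intro card_Un_disjoint) auto
  also have "\<dots> = card {A\<in>F. \<not> movable j F A} + card ?M"
    using card_image[OF i] by simp
  also have "\<dots> = card F"
  proof -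
    have "F = {A\<in>F. \<not> movable j F A} \<union> ?M" by auto
    then have "card F = card ({A\<in>F. \<not> movable j F A} \<union> ?M)" by simp
    also have "\<dots> = card {A\<in>F. \<not> movable j F A} + card ?M"
      using assms(1) by (intro card_Un_disjoint) auto
    finally show ?thesis by simp
  qed
  finally show ?thesis .
qed

lemma shadowI: "A \<in> F \<Longrightarrow> x \<in> A \<Longrightarrow> C = A - {x} \<Longrightarrow> C \<in> shadow F"
  unfolding shadow_def by blast

lemma SF_mem_iff:
  "C \<in> SF j G \<longleftrightarrow> (C \<in> G \<and> \<not> movable j G C) \<or> (\<exists>E\<in>G. movable j G E \<and> C = shf j E)"
  unfolding SF_def by auto

lemma shadow_SF:
  assumes j: "j \<noteq> 0"
  shows "shadow (SF j F) \<subseteq> SF j (shadow F)"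
proof
  fix C assume "C \<in> shadow (SF j F)"
  then obtain D x where D: "D \<in> SF j F" "x \<in> D" and C: "C = D - {x}"
    unfolding shadow_def by auto
  let ?G = "shadow F"
  from D(1) consider (a) "D \<in> F" "\<not> movable j F D" | (b) E where "E \<in> F" "movable j F E" "D = shf j E"
    unfolding SF_def by auto
  then show "C \<in> SF j ?G"
  proof cases
    case a
    have CG: "C \<in> ?G" using a D C by (intro shadowI[of D _ x]) auto
    have "\<not> movable j ?G C"
    proof
      assume m: "movable j ?G C"
      then have jC: "j \<in> C" "0 \<notin> C" "shf j C \<notin> ?G" unfolding movable_def by auto
      show False
      proof (cases "0 \<in> D")
        case True
        then have "x = 0" using jC C by auto
        then have "shf j C = D - {j}" using C True jC j unfolding shf_def by auto
        moreover have "D - {j} \<in> ?G" using a jC C by (intro shadowI[of D _ j]) auto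
        ultimately show False using jC by simp
      next
        case False
        then have "shf j D \<in> F" using a jC C unfolding movable_def by auto
        moreover have "x \<noteq> j" "x \<noteq> 0" using jC C D False by auto
        then have "shf j C = shf j D - {x}" using C unfolding shf_def by auto
        moreover have "x \<in> shf j D" using D \<open>x \<noteq> j\<close> unfolding shf_def by auto
        ultimately have "shf j C \<in> ?G" by (intro shadowI[of "shf j D" _ x]) auto
        then show False using jC by simp
      qed
    qed
    then show ?thesis using CG unfolding SF_def by auto
  next
    case b
    have E: "j \<in> E" "0 \<notin> E" using b unfolding movable_def by auto
    show ?thesis
    proof (cases "x = 0")
      case True
      then have "C = E - {j}" using b C E unfolding shf_def by auto
      then have "C \<in> ?G" "j \<notin> C" using b E by (auto intro: shadowI[of E _ j])
      then show ?thesis unfolding SF_def movable_def by auto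
    next
      case False
      have x: "x \<in> E" "x \<noteq> j" using False D b unfolding shf_def by auto
      have C0: "0 \<in> C" "j \<notin> C" using C b False E unfolding shf_def by auto
      have "C = shf j (E - {x})" using C b x E False unfolding shf_def by auto
      moreover have "E - {x} \<in> ?G" using b x by (intro shadowI[of E _ x]) auto
      moreover have "j \<in> E - {x}" "0 \<notin> E - {x}" using E x by auto
      ultimately show ?thesis
        unfolding SF_def movable_def using C0 by (cases "C \<in> ?G") auto
    qed
  qed
qed

lemma SF_unif:
  assumes "unif k F" "j \<noteq> 0"
  shows "unif k (SF j F)"
proof -
  have "card (shf j A) = k" if "A \<in> F" "movable j F A" for A
  proof -
    have "finite A" "card A = k" "j \<in> A" "0 \<notin> A" using that assms unfolding unif_def movable_def by auto
    moreover have "card A > 0" using \<open>finite A\<close> \<open>j \<in> A\<close> card_gt_0_iff by blast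
    ultimately show ?thesis unfolding shf_def
      by (simp add: card_insert_disjoint card_Diff_singleton)
  qed
  moreover have "finite (shf j A)" if "A \<in> F" for A using that assms unfolding unif_def shf_def by auto
  ultimately show ?thesis using assms unfolding unif_def SF_def by auto
qed

lemma SF_cnt0:
  assumes "finite F" "j \<noteq> 0"
  shows "cnt0 (SF j F) = cnt0 F + card {A\<in>F. movable j F A}"
proof -
  let ?M = "{A\<in>F. movable j F A}"
  have e: "{A\<in>SF j F. 0 \<in> A} = {A\<in>F. 0 \<in> A} \<union> shf j ` ?M"
    unfolding SF_def movable_def shf_def by auto
  have d: "{A\<in>F. 0 \<in> A} \<inter> shf j ` ?M = {}"
    unfolding movable_def by auto
  have i: "inj_on (shf j) ?M"
    by (rule inj_on_subset[OF shf_inj[OF assms(2)]]) (auto simp: movable_def)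
  show ?thesis unfolding cnt0_def e
    using card_Un_disjoint[OF _ _ d] assms(1) card_image[OF i] by simp
qed

lemma exists_stab_aux:
  assumes "finite U" "0 \<in> U"
  shows "unif k F \<Longrightarrow> F \<subseteq> Pow U \<Longrightarrow> \<exists>F'. unif k F' \<and> stab F' \<and> card F' = card F \<and> card (shadow F') \<le> card (shadow F)"
proof (induction "card (Pow U) - cnt0 F" arbitrary: F rule: less_induct)
  case less
  show ?case
  proof (cases "stab F")
    case True
    then show ?thesis using less.prems by blast
  next
    case False
    then obtain A a where A: "A \<in> F" "0 \<notin> A" "a \<in> A" "insert 0 (A - {a}) \<notin> F"
      unfolding stab_def by blast
    have a0: "a \<noteq> 0" using A by metis
    have fF: "finite F" using less.prems unfolding unif_def by auto
    let ?F2 = "SF a F"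
    have mA: "A \<in> {B\<in>F. movable a F B}" using A unfolding movable_def shf_def by auto
    have "card {B\<in>F. movable a F B} > 0"
      using mA fF card_gt_0_iff by (metis (no_types, lifting) empty_iff finite_subset mem_Collect_eq subsetI)
    then have c: "cnt0 ?F2 > cnt0 F" using SF_cnt0[OF fF a0] by simp
    have sub: "?F2 \<subseteq> Pow U"
      using less.prems(2) \<open>0 \<in> U\<close> unfolding SF_def shf_def by auto
    have "cnt0 ?F2 \<le> card ?F2" unfolding cnt0_def
      using SF_unif[OF less.prems(1) a0] unfolding unif_def by (intro card_mono) auto
    also have "\<dots> \<le> card (Pow U)" using sub \<open>finite U\<close> by (intro card_mono) auto
    finally have "card (Pow U) - cnt0 ?F2 < card (Pow U) - cnt0 F" using c by linarith
    from less.hyps[OF this SF_unif[OF less.prems(1) a0] sub]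
    obtain F' where F': "unif k F'" "stab F'" "card F' = card ?F2" "card (shadow F') \<le> card (shadow ?F2)"
      by blast
    have fs: "finite (shadow F)" using shadow_finite[OF less.prems(1)] .
    have "card (shadow ?F2) \<le> card (SF a (shadow F))"
      using shadow_SF[OF a0] fs unfolding SF_def by (intro card_mono) auto
    also have "\<dots> = card (shadow F)" using SF_card[OF fs a0] .
    finally show ?thesis using F' SF_card[OF fF a0] by auto
  qed
qed

lemma exists_stab:
  assumes "unif k F"
  shows "\<exists>F'. unif k F' \<and> stab F' \<and> card F' = card F \<and> card (shadow F') \<le> card (shadow F)"
proof -
  let ?U = "insert 0 (\<Union>F)"
  have "finite ?U" using assms unfolding unif_def by auto
  moreover have "F \<subseteq> Pow ?U" by auto
  ultimately show ?thesis using exists_stab_aux[of ?U k F] assms by auto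
qed

definition lk0 :: "nat set set \<Rightarrow> nat set set" where
  "lk0 F = (\<lambda>A. A - {0}) ` {A\<in>F. 0 \<in> A}"

definition rest0 :: "nat set set \<Rightarrow> nat set set" where
  "rest0 F = {A\<in>F. 0 \<notin> A}"

lemma split_card:
  assumes "unif k F"
  shows "card F = card (lk0 F) + card (rest0 F)"
proof -
  have fF: "finite F" using assms unfolding unif_def by auto
  have "inj_on (\<lambda>A. A - {0}) {A\<in>F. 0 \<in> A}"
    by (rule inj_onI) (metis (no_types, lifting) insert_Diff mem_Collect_eq)
  then have "card (lk0 F) = card {A\<in>F. 0 \<in> A}" unfolding lk0_def by (rule card_image)
  moreover have "F = {A\<in>F. 0 \<in> A} \<union> rest0 F" unfolding rest0_def by auto
  moreover have "card ({A\<in>F. 0 \<in> A} \<union> rest0 F) = card {A\<in>F. 0 \<in> A} + card (rest0 F)"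
    using fF unfolding rest0_def by (intro card_Un_disjoint) auto
  ultimately show ?thesis by simp
qed

lemma split_shadow:
  assumes "unif k F"
  shows "card (lk0 F) + card (shadow (lk0 F)) \<le> card (shadow F)"
proof -
  have u: "unif k F" by fact
  have fF: "finite F" using assms unfolding unif_def by auto
  have fl: "finite (lk0 F)" using fF unfolding lk0_def by auto
  have ul: "unif (k - 1) (lk0 F)" using assms fl unfolding unif_def lk0_def by auto
  have fsl: "finite (shadow (lk0 F))" using shadow_finite[OF ul] .
  have s1: "lk0 F \<subseteq> shadow F" unfolding lk0_def by (auto intro: shadowI)
  have s2: "insert 0 ` shadow (lk0 F) \<subseteq> shadow F"
  proof
    fix C assume "C \<in> insert 0 ` shadow (lk0 F)"
    then obtain A y where A: "A \<in> F" "0 \<in> A" "y \<in> A - {0}" "C = insert 0 ((A - {0}) - {y})"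
      unfolding shadow_def lk0_def by blast
    then have "C = A - {y}" by auto
    then show "C \<in> shadow F" using A by (intro shadowI[of A _ y]) auto
  qed
  have i: "inj_on (insert 0) (shadow (lk0 F))"
  proof (rule inj_onI)
    fix B C assume "B \<in> shadow (lk0 F)" "C \<in> shadow (lk0 F)" "insert 0 B = insert 0 C"
    moreover have "0 \<notin> B" "0 \<notin> C" using calculation unfolding shadow_def lk0_def by auto
    ultimately show "B = C" by (metis insert_ident)
  qed
  have d: "lk0 F \<inter> insert 0 ` shadow (lk0 F) = {}" unfolding lk0_def by auto
  have "card (lk0 F) + card (shadow (lk0 F)) = card (lk0 F \<union> insert 0 ` shadow (lk0 F))"
    using card_Un_disjoint[OF fl _ d] fsl card_image[OF i] by simp
  also have "\<dots> \<le> card (shadow F)"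
    using s1 s2 shadow_finite[OF u] by (intro card_mono) auto
  finally show ?thesis .
qed

lemma lk0_unif: "unif k F \<Longrightarrow> unif (k - 1) (lk0 F)"
  unfolding unif_def lk0_def by auto

lemma rest0_unif: "unif k F \<Longrightarrow> unif k (rest0 F)"
  unfolding unif_def rest0_def by auto

lemma stab_shadow:
  assumes "stab F"
  shows "shadow (rest0 F) \<subseteq> lk0 F"
proof
  fix C assume "C \<in> shadow (rest0 F)"
  then obtain A a where A: "A \<in> F" "0 \<notin> A" "a \<in> A" "C = A - {a}"
    unfolding shadow_def rest0_def by blast
  then have "insert 0 (A - {a}) \<in> F" using assms unfolding stab_def by blast
  moreover have "C = insert 0 (A - {a}) - {0}" using A by auto
  ultimately show "C \<in> lk0 F" unfolding lk0_def by blast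
qed

lemma stab_card:
  assumes "stab F" "unif k F"
  shows "card (shadow (rest0 F)) \<le> card (lk0 F)"
proof -
  have "finite (lk0 F)" using assms unfolding unif_def lk0_def by auto
  then show ?thesis using stab_shadow[OF assms(1)] by (intro card_mono)
qed

lemma two_sets:
  assumes u: "unif k F" and k: "k \<ge> 2" and c: "card F \<ge> 2"
  shows "card (shadow F) \<ge> k + 1"
proof -
  have fF: "finite F" using u unfolding unif_def by auto
  have "\<exists>A\<in>F. \<exists>B\<in>F. A \<noteq> B" using c card_le_Suc0_iff_eq[OF fF] by auto
  then obtain A B where AB: "A \<in> F" "B \<in> F" "A \<noteq> B" by blast
  have A: "finite A" "card A = k" and B: "finite B" "card B = k" using u AB unfolding unif_def by auto
  have "\<not> B \<subseteq> A"
  proof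
    assume "B \<subseteq> A"
    then have "B = A" using card_subset_eq A B by metis
    then show False using AB by simp
  qed
  then obtain y where y: "y \<in> B" "y \<notin> A" by blast
  have "card (B - {y}) = k - 1" using B y by simp
  then have "B - {y} \<noteq> {}" using k by (metis One_nat_def card.empty diff_is_0_eq not_less_eq_eq numeral_2_eq_2)
  then obtain z where z: "z \<in> B" "z \<noteq> y" by blast
  let ?S = "(\<lambda>x. A - {x}) ` A"
  have i: "inj_on (\<lambda>x. A - {x}) A"
    by (rule inj_onI) auto
  have cS: "card ?S = k" using card_image[OF i] A by simp
  have nS: "B - {z} \<notin> ?S" using y z by auto
  have sub: "insert (B - {z}) ?S \<subseteq> shadow F"
    using AB z by (auto intro: shadowI)
  have "card (insert (B - {z}) ?S) = k + 1" using cS nS A by simp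
  then show ?thesis using card_mono[OF shadow_finite[OF u] sub] by simp
qed

lemma two_unif:
  assumes u: "unif 2 H"
  shows "card H \<le> (card (shadow H) choose 2)"
proof -
  have fH: "finite H" and fU: "finite (\<Union>H)" using u unfolding unif_def by auto
  have "(\<lambda>v. {v}) ` (\<Union>H) \<subseteq> shadow H"
  proof
    fix C assume "C \<in> (\<lambda>v. {v}) ` (\<Union>H)"
    then obtain v A where vA: "v \<in> A" "A \<in> H" "C = {v}" by auto
    then have "card A = 2" using u unfolding unif_def by auto
    then obtain a b where "A = {a, b}" "a \<noteq> b" by (auto simp: card_2_iff)
    then have "\<exists>w\<in>A. A - {w} = {v}" using vA by auto
    then show "C \<in> shadow H" using vA by (auto intro: shadowI)
  qed
  then have "card ((\<lambda>v. {v}) ` (\<Union>H)) \<le> card (shadow H)"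
    by (rule card_mono[OF shadow_finite[OF u]])
  moreover have "card ((\<lambda>v. {v}) ` (\<Union>H)) = card (\<Union>H)"
    by (rule card_image) (simp add: inj_on_def)
  ultimately have "card (\<Union>H) \<le> card (shadow H)" by simp
  have "H \<subseteq> {S. S \<subseteq> \<Union>H \<and> card S = 2}" using u unfolding unif_def by auto
  then have "card H \<le> card {S. S \<subseteq> \<Union>H \<and> card S = 2}" using fU by (intro card_mono) auto
  also have "\<dots> = card (\<Union>H) choose 2" using n_subsets[OF fU] .
  also have "\<dots> \<le> card (shadow H) choose 2" by (rule binomial_right_mono) fact
  finally show ?thesis .
qed

lemma R_step:
  assumes H: "\<And>G1. unif 3 G1 \<Longrightarrow> card G1 \<ge> ((j+3) choose 3) + ((j+1) choose 2) + 1 \<Longrightarrow> card (shadow G1) \<ge> ((j+3) choose 2) + j + 1"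
    and u: "unif 3 G" and c: "card G \<ge> ((j+4) choose 3) + ((j+2) choose 2)"
  shows "card (shadow G) \<ge> ((j+4) choose 2) + (j+2)"
proof -
  obtain G' where G': "unif 3 G'" "stab G'" "card G' = card G" "card (shadow G') \<le> card (shadow G)"
    using exists_stab[OF u] by blast
  have sc: "card G' = card (lk0 G') + card (rest0 G')" using split_card[OF G'(1)] .
  have ss: "card (lk0 G') + card (shadow (lk0 G')) \<le> card (shadow G')" using split_shadow[OF G'(1)] .
  have st: "card (shadow (rest0 G')) \<le> card (lk0 G')" using stab_card[OF G'(2,1)] .
  show ?thesis
  proof (cases "card (lk0 G') \<ge> ((j+3) choose 2) + (j+1)")
    case True
    have u2: "unif 2 (lk0 G')" using lk0_unif[OF G'(1)] by simp
    have "card (shadow (lk0 G')) \<ge> j + 4"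
    proof (rule ccontr)
      assume "\<not> ?thesis"
      then have "card (shadow (lk0 G')) \<le> j + 3" by simp
      then have "(card (shadow (lk0 G')) choose 2) \<le> ((j+3) choose 2)" by (rule binomial_right_mono)
      then show False using two_unif[OF u2] True by simp
    qed
    then show ?thesis using True ss G'(4) by (simp add: eval_nat_numeral)
  next
    case False
    have "card (rest0 G') \<ge> ((j+3) choose 3) + ((j+1) choose 2) + 1"
      using False sc c G'(3) by (simp add: eval_nat_numeral)
    from H[OF rest0_unif[OF G'(1)] this] st False show ?thesis by simp
  qed
qed

lemma R_lemma:
  "unif 3 G \<Longrightarrow> card G \<ge> ((j+4) choose 3) + ((j+2) choose 2) \<Longrightarrow> card (shadow G) \<ge> ((j+4) choose 2) + (j+2)"
proof (induction j arbitrary: G)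
  case (0 G)
  show ?case
  proof (rule R_step[of 0])
    fix G1 assume "unif 3 G1" "card G1 \<ge> ((0+3) choose 3) + ((0+1) choose 2) + 1"
    then show "card (shadow G1) \<ge> ((0+3) choose 2) + 0 + 1"
      using two_sets[of 3 G1] by (simp add: eval_nat_numeral)
  qed (use 0 in auto)
next
  case (Suc i G)
  show ?case
  proof (rule R_step[of "Suc i"])
    fix G1 assume "unif 3 G1" "card G1 \<ge> ((Suc i+3) choose 3) + ((Suc i+1) choose 2) + 1"
    then have "card (shadow G1) \<ge> ((i+4) choose 2) + (i+2)"
      by (intro Suc.IH) (simp_all add: eval_nat_numeral)
    then show "card (shadow G1) \<ge> ((Suc i+3) choose 2) + Suc i + 1"
      by (simp add: eval_nat_numeral)
  qed (use Suc.prems in auto)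
qed

lemma Q_step:
  assumes H: "\<And>F1. unif 4 F1 \<Longrightarrow> card F1 \<ge> ((i+4) choose 4) + ((i+1) choose 3) + (i choose 2) + 1 \<Longrightarrow> card (shadow F1) \<ge> ((i+4) choose 3) + ((i+1) choose 2) + i + 1"
    and u: "unif 4 F" and c: "card F \<ge> ((i+5) choose 4) + ((i+2) choose 3) + ((i+1) choose 2) + 1"
  shows "card (shadow F) \<ge> ((i+5) choose 3) + ((i+2) choose 2) + (i+1) + 1"
proof -
  obtain G' where G': "unif 4 G'" "stab G'" "card G' = card F" "card (shadow G') \<le> card (shadow F)"
    using exists_stab[OF u] by blast
  have sc: "card G' = card (lk0 G') + card (rest0 G')" using split_card[OF G'(1)] .
  have ss: "card (lk0 G') + card (shadow (lk0 G')) \<le> card (shadow G')" using split_shadow[OF G'(1)] .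
  have st: "card (shadow (rest0 G')) \<le> card (lk0 G')" using stab_card[OF G'(2,1)] .
  show ?thesis
  proof (cases "card (lk0 G') \<ge> ((i+4) choose 3) + ((i+2) choose 2)")
    case True
    have u3: "unif 3 (lk0 G')" using lk0_unif[OF G'(1)] by simp
    have "card (shadow (lk0 G')) \<ge> ((i+4) choose 2) + (i+2)"
      using R_lemma[OF u3 True] .
    then show ?thesis using True ss G'(4) by (simp add: eval_nat_numeral)
  next
    case False
    have "card (rest0 G') \<ge> ((i+4) choose 4) + ((i+1) choose 3) + (i choose 2) + 1"
      using False sc c G'(3) by (simp add: eval_nat_numeral)
    from H[OF rest0_unif[OF G'(1)] this] st False show ?thesis by (simp add: eval_nat_numeral)
  qed
qed

lemma Q_lemma:
  "unif 4 F \<Longrightarrow> card F \<ge> ((j+4) choose 4) + ((j+1) choose 3) + (j choose 2) + 1 \<Longrightarrow> card (shadow F) \<ge> ((j+4) choose 3) + ((j+1) choose 2) + j + 1"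
proof (induction j arbitrary: F)
  case (0 F)
  then show ?case using two_sets[of 4 F] by (simp add: eval_nat_numeral)
next
  case (Suc i F)
  have "card (shadow F) \<ge> ((i+5) choose 3) + ((i+2) choose 2) + (i+1) + 1"
  proof (rule Q_step[of i])
    fix F1 assume "unif 4 F1" "card F1 \<ge> ((i+4) choose 4) + ((i+1) choose 3) + (i choose 2) + 1"
    then show "card (shadow F1) \<ge> ((i+4) choose 3) + ((i+1) choose 2) + i + 1"
      by (rule Suc.IH)
  qed (use Suc.prems in \<open>simp_all add: eval_nat_numeral\<close>)
  then show ?case by (simp add: eval_nat_numeral)
qed



lemma cs_Suc: "x > 0 \<Longrightarrow> canon_shift (Suc r) s x = ((GREATEST a. (a choose Suc r) \<le> x) choose s) + canon_shift r (s-1) (x - ((GREATEST a. (a choose Suc r) \<le> x) choose Suc r))"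
  by (simp add: Let_def)

lemma cs0: "canon_shift 0 s x = 0" by simp

lemma greatest_choose:
  assumes "(m choose r) \<le> y" "y < (Suc m choose r)"
  shows "(GREATEST a. (a choose r) \<le> y) = m"
proof (rule Greatest_equality)
  show "(m choose r) \<le> y" by fact
  fix b assume b: "(b choose r) \<le> y"
  show "b \<le> m"
  proof (rule ccontr)
    assume "\<not> b \<le> m"
    then have "Suc m \<le> b" by simp
    then have "(Suc m choose r) \<le> (b choose r)" by (rule binomial_right_mono)
    then show False using b assms(2) by simp
  qed
qed

lemma canon_val:
  assumes x: "x = ((k+6) choose 3) + ((k+3) choose 2) + (k+2)"
  shows "canon_shift 3 4 x = ((k+6) choose 4) + ((k+3) choose 3) + ((k+2) choose 2)"
proof -
  have x0: "x > 0" using x by simp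
  have g3: "(GREATEST a. (a choose Suc 2) \<le> x) = k + 6"
    by (rule greatest_choose) (simp_all add: x eval_nat_numeral)
  have r1: "x - ((k+6) choose Suc 2) = ((k+3) choose 2) + (k+2)" using x by simp
  have g2: "(GREATEST a. (a choose Suc 1) \<le> ((k+3) choose 2) + (k+2)) = k + 3"
    by (rule greatest_choose) (simp_all add: eval_nat_numeral)
  have g1: "(GREATEST a. (a choose Suc 0) \<le> k+2) = k + 2"
    by (rule greatest_choose) (simp_all add: eval_nat_numeral)
  have "canon_shift 3 4 x = canon_shift (Suc 2) 4 x" by simp
  also have "\<dots> = ((k+6) choose 4) + canon_shift (Suc 1) 3 (((k+3) choose 2) + (k+2))"
    using cs_Suc[OF x0, of 2 4] g3 r1 by (simp add: numeral_2_eq_2 del: canon_shift.simps)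
  also have "\<dots> = ((k+6) choose 4) + ((k+3) choose 3) + canon_shift (Suc 0) 2 (k+2)"
  proof -
    have r2: "((k+3) choose 2) + (k+2) - ((k+3) choose Suc 1) = k+2" by (simp add: numeral_2_eq_2)
    show ?thesis using cs_Suc[of "((k+3) choose 2) + (k+2)" 1 3] g2 r2 by (simp add: numeral_2_eq_2 del: canon_shift.simps)
  qed
  also have "\<dots> = ((k+6) choose 4) + ((k+3) choose 3) + ((k+2) choose 2)"
    using cs_Suc[of "k+2" 0 2] g1 cs0[of 1 0] by (simp add: numeral_2_eq_2 del: canon_shift.simps)
  finally show ?thesis .
qed

lemma x_form:
  assumes "n > 6" "x = (n choose 3) - 2 * (n - 2)"
  shows "\<exists>k. n = k + 7 \<and> x = ((k+6) choose 3) + ((k+3) choose 2) + (k+2)"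
proof -
  define k where "k = n - 7"
  have n: "n = k + 7" using assms(1) unfolding k_def by simp
  show ?thesis using assms(2) unfolding n by (intro exI[of _ k]) (simp add: eval_nat_numeral)
qed



lemma count_sup:
  assumes fV: "finite V" and K: "K \<subseteq> V" "card K \<le> r"
  shows "card {S. S \<subseteq> V \<and> card S = r \<and> K \<subseteq> S} = (card V - card K) choose (r - card K)"
proof -
  have fK: "finite K" using fV K finite_subset by blast
  let ?A = "{S. S \<subseteq> V \<and> card S = r \<and> K \<subseteq> S}"
  let ?B = "{T. T \<subseteq> V - K \<and> card T = r - card K}"
  have i: "inj_on (\<lambda>S. S - K) ?A"
    by (rule inj_onI) (metis (no_types, lifting) Diff_partition mem_Collect_eq)
  have im: "(\<lambda>S. S - K) ` ?A = ?B"
  proof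
    show "(\<lambda>S. S - K) ` ?A \<subseteq> ?B"
    proof
      fix T assume "T \<in> (\<lambda>S. S - K) ` ?A"
      then obtain S where S: "S \<subseteq> V" "card S = r" "K \<subseteq> S" "T = S - K" by blast
      have "finite S" using S fV finite_subset by blast
      then have "card T = r - card K" using S fK by (simp add: card_Diff_subset)
      then show "T \<in> ?B" using S by auto
    qed
  next
    show "?B \<subseteq> (\<lambda>S. S - K) ` ?A"
    proof
      fix T assume T: "T \<in> ?B"
      have fT: "finite T" using T fV finite_subset by blast
      have "card (T \<union> K) = card T + card K" using T fT fK by (intro card_Un_disjoint) auto
      then have "card (T \<union> K) = r" using T K by simp
      moreover have "T = (T \<union> K) - K" using T by auto
      ultimately show "T \<in> (\<lambda>S. S - K) ` ?A" using T K by blast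
    qed
  qed
  have "card ?A = card ?B" using card_image[OF i] im by simp
  also have "\<dots> = card (V - K) choose (r - card K)" using fV by (intro n_subsets) auto
  also have "card (V - K) = card V - card K" using K fK by (simp add: card_Diff_subset)
  finally show ?thesis .
qed

definition cE :: "nat \<Rightarrow> nat \<Rightarrow> nat \<Rightarrow> bool" where
  "cE n u v \<longleftrightarrow> u < n \<and> v < n \<and> u \<noteq> v \<and> {u, v} \<noteq> {0, 1} \<and> {u, v} \<noteq> {2, 3}"

lemma cE_graph: "simple_graph {..<n} (cE n)"
proof -
  have "cE n v u" if "cE n u v" for u v
    using that unfolding cE_def by (simp add: insert_commute)
  moreover have "\<not> cE n u u" for u unfolding cE_def by simp
  moreover have "u \<in> {..<n} \<and> v \<in> {..<n}" if "cE n u v" for u v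
    using that unfolding cE_def by simp
  ultimately show ?thesis unfolding simple_graph_def by blast
qed

lemma cE_clique:
  assumes "S \<subseteq> {..<n}"
  shows "(\<forall>u\<in>S. \<forall>v\<in>S. u \<noteq> v \<longrightarrow> cE n u v) \<longleftrightarrow> \<not> {0, 1} \<subseteq> S \<and> \<not> {2, 3} \<subseteq> S"
proof
  assume h: "\<forall>u\<in>S. \<forall>v\<in>S. u \<noteq> v \<longrightarrow> cE n u v"
  show "\<not> {0, 1} \<subseteq> S \<and> \<not> {2, 3} \<subseteq> S"
  proof
    show "\<not> {0, 1} \<subseteq> S"
    proof
      assume "{0, 1} \<subseteq> S"
      then have "cE n 0 1" using h by simp
      then show False unfolding cE_def by simp
    qed
    show "\<not> {2, 3} \<subseteq> S"
    proof
      assume "{2, 3} \<subseteq> S"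
      then have "cE n 2 3" using h by simp
      then show False unfolding cE_def by simp
    qed
  qed
next
  assume a: "\<not> {0, 1} \<subseteq> S \<and> \<not> {2, 3} \<subseteq> S"
  show "\<forall>u\<in>S. \<forall>v\<in>S. u \<noteq> v \<longrightarrow> cE n u v"
  proof (intro ballI impI)
    fix u v assume uv: "u \<in> S" "v \<in> S" "u \<noteq> v"
    have s: "{u, v} \<subseteq> S" using uv by simp
    have "{u, v} \<noteq> {0, 1}"
    proof
      assume "{u, v} = {0, 1}" with s a show False by simp
    qed
    moreover have "{u, v} \<noteq> {2, 3}"
    proof
      assume "{u, v} = {2, 3}" with s a show False by simp
    qed
    moreover have "u < n" "v < n" using uv assms by auto
    ultimately show "cE n u v" using uv unfolding cE_def by simp
  qed
qed

lemma cE_count: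
  assumes n: "n \<ge> 4" and r: "r \<ge> 2"
  shows "kcount r {..<n} (cE n) + card ({S. S \<subseteq> {..<n} \<and> card S = r \<and> {0,1} \<subseteq> S} \<union> {S. S \<subseteq> {..<n} \<and> card S = r \<and> {2,3} \<subseteq> S})
     = n choose r"
    and "card {S. S \<subseteq> {..<n} \<and> card S = r \<and> {0,1} \<subseteq> S} = (n - 2) choose (r - 2)"
    and "card {S. S \<subseteq> {..<n} \<and> card S = r \<and> {2,3} \<subseteq> S} = (n - 2) choose (r - 2)"
proof -
  let ?A = "{S. S \<subseteq> {..<n} \<and> card S = r}"
  let ?P1 = "{S. S \<subseteq> {..<n} \<and> card S = r \<and> {0,1} \<subseteq> S}"
  let ?P2 = "{S. S \<subseteq> {..<n} \<and> card S = r \<and> {2,3} \<subseteq> S}"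
  have e: "{S. S \<subseteq> {..<n} \<and> card S = r \<and> (\<forall>u\<in>S. \<forall>v\<in>S. u \<noteq> v \<longrightarrow> cE n u v)} = ?A - (?P1 \<union> ?P2)"
  proof (rule set_eqI)
    fix S
    show "S \<in> {S. S \<subseteq> {..<n} \<and> card S = r \<and> (\<forall>u\<in>S. \<forall>v\<in>S. u \<noteq> v \<longrightarrow> cE n u v)} \<longleftrightarrow> S \<in> ?A - (?P1 \<union> ?P2)"
      using cE_clique[of S n] by auto
  qed
  have fA: "finite ?A" by (rule finite_subset[of _ "Pow {..<n}"]) auto
  have sub: "?P1 \<union> ?P2 \<subseteq> ?A" by auto
  have "kcount r {..<n} (cE n) = card ?A - card (?P1 \<union> ?P2)"
    unfolding kcount_def e using sub fA by (intro card_Diff_subset) (auto intro: finite_subset)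
  moreover have "card (?P1 \<union> ?P2) \<le> card ?A" using sub fA by (intro card_mono)
  moreover have "card ?A = n choose r" using n_subsets[of "{..<n}" r] by simp
  ultimately show "kcount r {..<n} (cE n) + card (?P1 \<union> ?P2) = n choose r" by simp
  show "card ?P1 = (n - 2) choose (r - 2)"
  proof -
    have c: "card {0::nat, 1} = 2" by simp
    have "{0::nat, 1} \<subseteq> {..<n}" using n by auto
    moreover have "card {0::nat,1} \<le> r" using c r by linarith
    ultimately have "card ?P1 = (card {..<n} - card {0::nat,1}) choose (r - card {0::nat,1})"
      by (rule count_sup[OF finite_lessThan])
    then show ?thesis unfolding c card_lessThan .
  qed
  show "card ?P2 = (n - 2) choose (r - 2)"
  proof -
    have c: "card {2::nat, 3} = 2" by simp
    have "{2::nat, 3} \<subseteq> {..<n}" using n by auto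
    moreover have "card {2::nat,3} \<le> r" using c r by linarith
    ultimately have "card ?P2 = (card {..<n} - card {2::nat,3}) choose (r - card {2::nat,3})"
      by (rule count_sup[OF finite_lessThan])
    then show ?thesis unfolding c card_lessThan .
  qed
qed

lemma kc3:
  assumes n: "n \<ge> 4"
  shows "kcount 3 {..<n} (cE n) = (n choose 3) - 2 * (n - 2)"
proof -
  let ?P1 = "{S. S \<subseteq> {..<n} \<and> card S = 3 \<and> {0,1} \<subseteq> S}"
  let ?P2 = "{S. S \<subseteq> {..<n} \<and> card S = 3 \<and> {2,3} \<subseteq> S}"
  have d: "?P1 \<inter> ?P2 = {}"
  proof (rule ccontr)
    assume "?P1 \<inter> ?P2 \<noteq> {}"
    then obtain S where S: "S \<subseteq> {..<n}" "card S = 3" "{0,1,2,3} \<subseteq> S" by auto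
    have "card {0::nat,1,2,3} \<le> card S" using S by (intro card_mono) (auto intro: finite_subset)
    then show False using S by simp
  qed
  have f1: "finite ?P1" by (rule finite_subset[of _ "Pow {..<n}"]) auto
  have f2: "finite ?P2" by (rule finite_subset[of _ "Pow {..<n}"]) auto
  have "card (?P1 \<union> ?P2) = card ?P1 + card ?P2" using card_Un_disjoint[OF f1 f2 d] .
  moreover note cE_count[OF n, of 3]
  ultimately show ?thesis by simp
qed

lemma kc4:
  assumes n: "n \<ge> 4"
  shows "kcount 4 {..<n} (cE n) + 2 * ((n - 2) choose 2) \<ge> (n choose 4) + 1"
proof -
  let ?P1 = "{S. S \<subseteq> {..<n} \<and> card S = 4 \<and> {0,1} \<subseteq> S}"
  let ?P2 = "{S. S \<subseteq> {..<n} \<and> card S = 4 \<and> {2,3} \<subseteq> S}"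
  have f1: "finite ?P1" by (rule finite_subset[of _ "Pow {..<n}"]) auto
  have f2: "finite ?P2" by (rule finite_subset[of _ "Pow {..<n}"]) auto
  have c4: "card {0::nat,1,2,3} = 4" by simp
  have "{0::nat,1,2,3} \<subseteq> {..<n}" using n by auto
  then have "{0::nat,1,2,3} \<in> ?P1 \<inter> ?P2" using c4 by simp
  then have ne: "?P1 \<inter> ?P2 \<noteq> {}" by blast
  have "finite (?P1 \<inter> ?P2)" using f1 by simp
  then have "card (?P1 \<inter> ?P2) > 0" using ne card_gt_0_iff by blast
  then have "card (?P1 \<inter> ?P2) \<ge> 1" by simp
  moreover have "card (?P1 \<union> ?P2) + card (?P1 \<inter> ?P2) = card ?P1 + card ?P2" using card_Un_Int[OF f1 f2] by simp
  moreover note cE_count[OF n, of 4]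
  ultimately show ?thesis by simp
qed

lemma upper:
  assumes g: "simple_graph V E" and c3: "kcount 3 V E \<le> ((k+6) choose 3) + ((k+3) choose 2) + (k+2)"
  shows "kcount 4 V E \<le> ((k+6) choose 4) + ((k+3) choose 3) + ((k+2) choose 2)"
proof (rule ccontr)
  assume "\<not> ?thesis"
  then have c4: "kcount 4 V E \<ge> ((k+6) choose 4) + ((k+3) choose 3) + ((k+2) choose 2) + 1" by simp
  have fV: "finite V" using g unfolding simple_graph_def by simp
  let ?cl = "\<lambda>S. \<forall>u\<in>S. \<forall>v\<in>S. u \<noteq> v \<longrightarrow> E u v"
  let ?F = "{S. S \<subseteq> V \<and> card S = 4 \<and> ?cl S}"
  let ?T = "{S. S \<subseteq> V \<and> card S = 3 \<and> ?cl S}"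
  have fF: "finite ?F" by (rule finite_subset[of _ "Pow V"]) (use fV in auto)
  have fT: "finite ?T" by (rule finite_subset[of _ "Pow V"]) (use fV in auto)
  have u: "unif 4 ?F" unfolding unif_def using fF fV by (auto intro: finite_subset)
  have "shadow ?F \<subseteq> ?T"
  proof
    fix C assume "C \<in> shadow ?F"
    then obtain A y where A: "A \<in> ?F" "y \<in> A" "C = A - {y}" unfolding shadow_def by blast
    have "finite A" using A fV by (auto intro: finite_subset)
    then have "card C = 3" using A by simp
    then show "C \<in> ?T" using A by auto
  qed
  then have "card (shadow ?F) \<le> card ?T" using fT by (intro card_mono)
  also have "\<dots> = kcount 3 V E" unfolding kcount_def ..
  finally have s: "card (shadow ?F) \<le> ((k+6) choose 3) + ((k+3) choose 2) + (k+2)" using c3 by simp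
  have e: "k+2+4 = k+6" "k+2+1 = k+3" by simp_all
  have q: "card ?F \<ge> ((k+6) choose 4) + ((k+3) choose 3) + ((k+2) choose 2) + 1 \<Longrightarrow>
      card (shadow ?F) \<ge> ((k+6) choose 3) + ((k+3) choose 2) + (k+2) + 1"
    using Q_lemma[OF u, of "k+2"] unfolding e .
  have "card ?F \<ge> ((k+6) choose 4) + ((k+3) choose 3) + ((k+2) choose 2) + 1"
    using c4 unfolding kcount_def .
  from q[OF this] show False using s by linarith
qed

theorem theorem5:
  fixes n x :: nat
  assumes "n > 6"
    and "x = (n choose 3) - 2 * (n - 2)"
  shows "canon_shift 3 4 x - 1 \<le> kmax 4 3 x \<and> kmax 4 3 x \<le> canon_shift 3 4 x"
proof -
  obtain k where n: "n = k + 7" and x: "x = ((k+6) choose 3) + ((k+3) choose 2) + (k+2)"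
    using x_form[OF assms] by blast
  let ?B = "((k+6) choose 4) + ((k+3) choose 3) + ((k+2) choose 2)"
  have cs: "canon_shift 3 4 x = ?B" using canon_val[OF x] .
  let ?S = "{kcount 4 V E | V E. simple_graph V E \<and> kcount 3 V E \<le> x}"
  have bnd: "c \<le> ?B" if cS: "c \<in> ?S" for c
  proof -
    obtain V E where "c = kcount 4 V E" "simple_graph V E" "kcount 3 V E \<le> x" using cS by blast
    then show ?thesis using upper[of V E k] x by simp
  qed
  have "?S \<subseteq> {..?B}" using bnd by auto
  then have fS: "finite ?S" by (rule finite_subset) simp
  have n4: "n \<ge> 4" using assms by simp
  have "kcount 3 {..<n} (cE n) \<le> x" using kc3[OF n4] assms(2) by simp
  then have mem: "kcount 4 {..<n} (cE n) \<in> ?S"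
    using cE_graph[of n] by blast
  have id: "(n choose 4) + 2 = ?B + 2 * ((n - 2) choose 2)"
    unfolding n by (simp add: eval_nat_numeral)
  have low: "kcount 4 {..<n} (cE n) \<ge> ?B - 1" using kc4[OF n4] id by simp
  have "Max ?S \<le> ?B" using fS mem bnd by (subst Max_le_iff) auto
  moreover have "Max ?S \<ge> ?B - 1" using Max_ge[OF fS mem] low by simp
  ultimately show ?thesis unfolding kmax_def cs by simp
qed

end
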